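(* Let $\mathcal{A}$ be a finite abelian group. Then $$\Psi_{\mathcal{A}}(x)=\sum_{K\le\mathcal{A}}\mu(K)\left((1+x^2)^{\frac{|K|-|O_2(K)|-1}{2}}(1+x)^{|O_2(K)|}-1\right),$$ and hence $$\mathcal{E}(\mathcal{A})=\Psi_{\mathcal{A}}(1)=\sum_{K\le\mathcal{A}}\mu(K)\left(2^{\frac{|K|+|O_2(K)|-1}{2}}-1\right).$$
   Context: For a finite group $\mathcal{A}$ with identity $e$, let $G(\mathcal{A})=\{\Omega\subseteq\mathcal{A}:\Omega^{-1}=\Omega,\ \langle\Omega\rangle=\mathcal{A},\ e\notin\Omega\}$. For $k\ge1$ let $a_k(\mathcal{A})$ be the number of orbits of the inner automorphism group $\mathrm{Inn}(\mathcal{A})$ (acting by $\alpha\cdot\Omega=\alpha(\Omega)$) on $\{\Omega\in G(\mathcal{A}):|\Omega|=k\}$ (the number of equivalence classes of Cayley graphs of $\mathcal{A}$ of degree $k$); $\Psi_{\mathcal{A}}(x)=\sum_{k=1}^{|\mathcal{A}|-1}a_k(\mathcal{A})x^k$ and $\mathcal{E}(\mathcal{A})=\Psi_{\mathcal{A}}(1)$. For a subgroup $K$, $O_2(K)=\{g\in K:g^2=e,\ g\ne e\}$. The Möbius function $\mu$ on the subgroup lattice of $\mathcal{A}$ is defined recursively by $\sum_{H\ge K}\mu(H)=1$ if $K=\mathcal{A}$ and $=0$ if $K<\mathcal{A}$. *)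

theory Defs
  imports "HOL-Algebra.Algebra"
begin

definition gen_sets :: "('a, 'b) monoid_scheme \<Rightarrow> 'a set set" where
  "gen_sets G = {\<Omega>. \<Omega> \<subseteq> carrier G \<and> (\<lambda>x. inv\<^bsub>G\<^esub> x) ` \<Omega> = \<Omega>
                     \<and> generate G \<Omega> = carrier G \<and> \<one>\<^bsub>G\<^esub> \<notin> \<Omega>}"

definition inner_aut :: "('a, 'b) monoid_scheme \<Rightarrow> 'a \<Rightarrow> 'a \<Rightarrow> 'a" where
  "inner_aut G g = (\<lambda>x. g \<otimes>\<^bsub>G\<^esub> x \<otimes>\<^bsub>G\<^esub> inv\<^bsub>G\<^esub> g)"

definition cayley_count :: "('a, 'b) monoid_scheme \<Rightarrow> nat \<Rightarrow> nat" where
  "cayley_count G k = card {{inner_aut G g ` \<Omega> | g. g \<in> carrier G} | \<Omega>.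
                              \<Omega> \<in> gen_sets G \<and> card \<Omega> = k}"

definition Psi :: "('a, 'b) monoid_scheme \<Rightarrow> real \<Rightarrow> real" where
  "Psi G x = (\<Sum>k = 1..card (carrier G) - 1. real (cayley_count G k) * x ^ k)"

definition Ecount :: "('a, 'b) monoid_scheme \<Rightarrow> real" where
  "Ecount G = Psi G 1"

definition O2 :: "('a, 'b) monoid_scheme \<Rightarrow> 'a set \<Rightarrow> 'a set" where
  "O2 G K = {g \<in> K. g \<otimes>\<^bsub>G\<^esub> g = \<one>\<^bsub>G\<^esub> \<and> g \<noteq> \<one>\<^bsub>G\<^esub>}"

definition sg_mobius :: "('a, 'b) monoid_scheme \<Rightarrow> 'a set \<Rightarrow> int" where
  "sg_mobius G = (THE f. (\<forall>K. subgroup K G \<longrightarrow>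
        (\<Sum>H\<in>{H. subgroup H G \<and> K \<subseteq> H}. f H) = (if K = carrier G then 1 else 0))
      \<and> (\<forall>K. \<not> subgroup K G \<longrightarrow> f K = 0))"

end

theory Submission
  imports Defs
begin


lemma finite_subgroups:
  "finite (carrier G) \<Longrightarrow> finite {H. subgroup H G \<and> P H}"
  by (rule finite_subset[of _ "Pow (carrier G)"]) (auto dest: subgroup.subset)

function mob :: "('a,'b) monoid_scheme \<Rightarrow> 'a set \<Rightarrow> int" where
  "mob G K = (if subgroup K G \<and> finite (carrier G) then
      (if K = carrier G then 1 else 0) - (\<Sum>H\<in>{H. subgroup H G \<and> K \<subset> H}. mob G H) else 0)"
  by auto
termination
proof (relation "measure (\<lambda>(G,K). card (carrier G) - card K)", simp)
  fix G :: "('a,'b) monoid_scheme" and K H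
  assume a0: "subgroup K G \<and> finite (carrier G)" and a1: "H \<in> {H. subgroup H G \<and> K \<subset> H}"
  have a: "subgroup K G" "finite (carrier G)" "subgroup H G" "K \<subset> H" using a0 a1 by auto
  have "card K < card H" using a by (meson psubset_card_mono finite_subset subgroup.subset)
  moreover have "card H \<le> card (carrier G)" using a by (meson card_mono subgroup.subset)
  ultimately show "((G, H), G, K) \<in> measure (\<lambda>(G, K). card (carrier G) - card K)" by simp
qed

declare mob.simps[simp del]

definition mob_spec :: "('a,'b) monoid_scheme \<Rightarrow> ('a set \<Rightarrow> int) \<Rightarrow> bool" where
  "mob_spec G f \<longleftrightarrow> (\<forall>K. subgroup K G \<longrightarrow>
        (\<Sum>H\<in>{H. subgroup H G \<and> K \<subseteq> H}. f H) = (if K = carrier G then 1 else 0))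
      \<and> (\<forall>K. \<not> subgroup K G \<longrightarrow> f K = 0)"

lemma split_up:
  assumes "finite (carrier G)" "subgroup K G"
  shows "(\<Sum>H\<in>{H. subgroup H G \<and> K \<subseteq> H}. f H) = f K + (\<Sum>H\<in>{H. subgroup H G \<and> K \<subset> H}. f H)"
proof -
  have "{H. subgroup H G \<and> K \<subseteq> H} = insert K {H. subgroup H G \<and> K \<subset> H}" using assms by auto
  then show ?thesis using finite_subgroups[OF assms(1)] by simp
qed

lemma mob_spec_mob: "finite (carrier G) \<Longrightarrow> mob_spec G (mob G)"
  unfolding mob_spec_def
proof (intro conjI allI impI)
  fix K assume f: "finite (carrier G)" and K: "subgroup K G"
  show "(\<Sum>H\<in>{H. subgroup H G \<and> K \<subseteq> H}. mob G H) = (if K = carrier G then 1 else 0)"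
    unfolding split_up[OF f K] using f K by (subst mob.simps) simp
next
  fix K assume "\<not> subgroup K G" then show "mob G K = 0" by (subst mob.simps) simp
qed

lemma mob_spec_unique:
  assumes f: "finite (carrier G)" and sf: "mob_spec G f" and sg: "mob_spec G g"
  shows "f K = g K"
proof (induction "card (carrier G) - card K" arbitrary: K rule: less_induct)
  case less
  show ?case
  proof (cases "subgroup K G")
    case False then show ?thesis using sf sg by (simp add: mob_spec_def)
  next
    case K: True
    have IH: "f H = g H" if "subgroup H G" "K \<subset> H" for H
    proof (rule less)
      have "card K < card H" using that K f by (meson psubset_card_mono finite_subset subgroup.subset)
      moreover have "card H \<le> card (carrier G)" using that f by (meson card_mono subgroup.subset)
      ultimately show "card (carrier G) - card H < card (carrier G) - card K" by linarith
    qed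
    have "f K + (\<Sum>H\<in>{H. subgroup H G \<and> K \<subset> H}. f H) = g K + (\<Sum>H\<in>{H. subgroup H G \<and> K \<subset> H}. g H)"
      using sf sg K unfolding mob_spec_def split_up[OF f K, symmetric] by simp
    moreover have "(\<Sum>H\<in>{H. subgroup H G \<and> K \<subset> H}. f H) = (\<Sum>H\<in>{H. subgroup H G \<and> K \<subset> H}. g H)"
      by (rule sum.cong) (auto intro: IH)
    ultimately show ?thesis by simp
  qed
qed

lemma sg_mobius_spec:
  assumes "finite (carrier G)" shows "mob_spec G (sg_mobius G)"
proof -
  have "sg_mobius G = mob G"
    unfolding sg_mobius_def mob_spec_def[symmetric]
    using mob_spec_mob[OF assms] mob_spec_unique[OF assms]
    by (intro the_equality) auto
  then show ?thesis using mob_spec_mob[OF assms] by simp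
qed



context group begin

definition Orb :: "'a set \<Rightarrow> 'a set set" where
  "Orb K = (\<lambda>g. {g, inv g}) ` (K - {\<one>})"

lemma orb_disj:
  assumes "g \<in> carrier G" "h \<in> carrier G" "{g, inv g} \<inter> {h, inv h} \<noteq> {}"
  shows "{g, inv g} = {h, inv h}"
proof -
  have "h = g \<or> h = inv g" using assms by (auto simp: inv_equality)
  then show ?thesis using assms by auto
qed

lemma count_sym:
  fixes x :: real
  assumes K: "subgroup K G" and fK: "finite K"
  shows "\<exists>b. card K = 1 + card (O2 G K) + 2 * b \<and>
    (\<Sum>\<Omega>\<in>{\<Omega>. \<Omega> \<subseteq> K \<and> (\<lambda>g. inv g) ` \<Omega> = \<Omega> \<and> \<one> \<notin> \<Omega>}. x ^ card \<Omega>)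
      = (1 + x\<^sup>2) ^ b * (1 + x) ^ card (O2 G K)"
proof -
  have Kc: "K \<subseteq> carrier G" by (rule subgroup.subset[OF K])
  have Kinv: "inv g \<in> K" if "g \<in> K" for g by (rule subgroup.m_inv_closed[OF K that])
  have one: "\<one> \<in> K" by (rule subgroup.one_closed[OF K])
  have inv1: "inv g \<noteq> \<one>" if "g \<in> K" "g \<noteq> \<one>" for g
    using that Kc by (metis inv_inv inv_one subsetD)
  define Ob where "Ob = Orb K"
  have finO: "finite Ob" unfolding Ob_def Orb_def using fK by simp
  have O_sub: "ob \<subseteq> K - {\<one>}" if "ob \<in> Ob" for ob
    using that Kinv inv1 unfolding Ob_def Orb_def by auto
  have O_fin: "finite ob" if "ob \<in> Ob" for ob using O_sub[OF that] fK finite_subset by blast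
  have O_ne: "ob \<noteq> {}" if "ob \<in> Ob" for ob using that unfolding Ob_def Orb_def by auto
  have disj: "pairwise disjnt Ob"
  proof (rule pairwiseI)
    fix A B assume AB: "A \<in> Ob" "B \<in> Ob" "A \<noteq> B"
    then obtain g h where gh: "g \<in> K" "h \<in> K" "A = {g, inv g}" "B = {h, inv h}"
      unfolding Ob_def Orb_def by auto
    have "g \<in> carrier G" "h \<in> carrier G" using gh Kc by auto
    then show "disjnt A B" unfolding disjnt_def using orb_disj[of g h] gh AB(3) by auto
  qed
  have UO: "\<Union>Ob = K - {\<one>}"
  proof
    show "\<Union>Ob \<subseteq> K - {\<one>}" using O_sub by blast
    show "K - {\<one>} \<subseteq> \<Union>Ob" unfolding Ob_def Orb_def by blast
  qed
  define S where "S = {\<Omega>. \<Omega> \<subseteq> K \<and> (\<lambda>g. inv g) ` \<Omega> = \<Omega> \<and> \<one> \<notin> \<Omega>}"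
  have bij: "bij_betw Union (Pow Ob) S"
  proof (rule bij_betwI')
    fix T1 T2 assume T: "T1 \<in> Pow Ob" "T2 \<in> Pow Ob"
    show "(\<Union>T1 = \<Union>T2) = (T1 = T2)"
    proof
      assume eq: "\<Union>T1 = \<Union>T2"
      have *: "T1' \<subseteq> T2'" if T': "T1' \<subseteq> Ob" "T2' \<subseteq> Ob" "\<Union>T1' = \<Union>T2'" for T1' T2'
      proof
        fix ob assume ob: "ob \<in> T1'"
        then obtain g where g: "g \<in> ob" using O_ne T' by blast
        then have "g \<in> \<Union>T2'" using ob T' by blast
        then obtain ob2 where ob2: "ob2 \<in> T2'" "g \<in> ob2" by blast
        then have "ob = ob2" using disj ob g T' unfolding pairwise_def disjnt_def by blast
        then show "ob \<in> T2'" using ob2 by simp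
      qed
      show "T1 = T2" using *[of T1 T2] *[of T2 T1] T eq by auto
    qed simp
  next
    fix T assume T: "T \<in> Pow Ob"
    have a: "\<Union>T \<subseteq> K - {\<one>}" using T O_sub by blast
    have b: "(\<lambda>g. inv g) ` (\<Union>T) = \<Union>T"
    proof -
      have io: "(\<lambda>g. inv g) ` ob = ob" if "ob \<in> Ob" for ob
        using that Kc unfolding Ob_def Orb_def by auto
      have "(\<lambda>g. inv g) ` (\<Union>T) = (\<Union>ob\<in>T. (\<lambda>g. inv g) ` ob)" by (rule image_Union)
      also have "\<dots> = (\<Union>ob\<in>T. ob)" by (rule SUP_cong) (use io T in auto)
      finally show ?thesis by simp
    qed
    show "\<Union>T \<in> S" unfolding S_def using a b by auto
  next
    fix \<Omega> assume "\<Omega> \<in> S"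
    then have \<Omega>: "\<Omega> \<subseteq> K" "(\<lambda>g. inv g) ` \<Omega> = \<Omega>" "\<one> \<notin> \<Omega>" unfolding S_def by auto
    define T where "T = {ob \<in> Ob. ob \<subseteq> \<Omega>}"
    have "\<Union>T = \<Omega>"
    proof
      show "\<Union>T \<subseteq> \<Omega>" unfolding T_def by blast
      show "\<Omega> \<subseteq> \<Union>T"
      proof
        fix g assume g: "g \<in> \<Omega>"
        then have "inv g \<in> \<Omega>" using \<Omega>(2) by blast
        moreover have "{g, inv g} \<in> Ob" unfolding Ob_def Orb_def using g \<Omega> by blast
        ultimately show "g \<in> \<Union>T" unfolding T_def using g by blast
      qed
    qed
    then show "\<exists>T\<in>Pow Ob. \<Omega> = \<Union>T" unfolding T_def by blast
  qed
  have "(\<Sum>\<Omega>\<in>S. x ^ card \<Omega>) = (\<Sum>T\<in>Pow Ob. x ^ card (\<Union>T))"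
    using sum.reindex_bij_betw[OF bij, of "\<lambda>\<Omega>. x ^ card \<Omega>"] by simp
  also have "\<dots> = (\<Sum>T\<in>Pow Ob. (\<Prod>ob\<in>T. x ^ card ob) * (\<Prod>ob\<in>Ob-T. 1))"
  proof (rule sum.cong)
    fix T assume T: "T \<in> Pow Ob"
    have "card (\<Union>T) = sum card T"
      using card_Union_disjoint[OF pairwise_subset[OF disj, of T]] T O_fin by auto
    moreover have "finite T" using T finO finite_subset by auto
    ultimately show "x ^ card (\<Union>T) = (\<Prod>ob\<in>T. x ^ card ob) * (\<Prod>ob\<in>Ob-T. 1)"
      by (simp add: power_sum)
  qed simp
  also have "\<dots> = (\<Prod>ob\<in>Ob. x ^ card ob + 1)"
    using prod_add[OF finO, of "\<lambda>ob. x ^ card ob" "\<lambda>_. 1"] by simp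
  finally have P: "(\<Sum>\<Omega>\<in>S. x ^ card \<Omega>) = (\<Prod>ob\<in>Ob. x ^ card ob + 1)" .
  define O1 where "O1 = {ob\<in>Ob. card ob = 1}"
  define O2' where "O2' = {ob\<in>Ob. card ob = 2}"
  have card12: "card ob = 1 \<or> card ob = 2" if "ob \<in> Ob" for ob
    using that unfolding Ob_def Orb_def by (auto simp: card_insert_if split: if_splits)
  have Osplit1: "Ob = O1 \<union> O2'"
  proof
    show "Ob \<subseteq> O1 \<union> O2'"
    proof
      fix ob assume "ob \<in> Ob" then show "ob \<in> O1 \<union> O2'" using card12[of ob] unfolding O1_def O2'_def by blast
    qed
    show "O1 \<union> O2' \<subseteq> Ob" unfolding O1_def O2'_def by blast
  qed
  have Osplit2: "O1 \<inter> O2' = {}" unfolding O1_def O2'_def by auto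
  note Osplit = Osplit1 Osplit2
  have fin12: "finite O1" "finite O2'" using finO unfolding O1_def O2'_def by auto
  have "(\<Prod>ob\<in>Ob. x ^ card ob + 1) = (\<Prod>ob\<in>O1. x ^ card ob + 1) * (\<Prod>ob\<in>O2'. x ^ card ob + 1)"
    using Osplit fin12 prod.union_disjoint by metis
  also have "\<dots> = (1 + x) ^ card O1 * (1 + x\<^sup>2) ^ card O2'"
    unfolding O1_def O2'_def by (simp add: add.commute)
  finally have P2: "(\<Sum>\<Omega>\<in>S. x ^ card \<Omega>) = (1 + x) ^ card O1 * (1 + x\<^sup>2) ^ card O2'" using P by simp
  have O1eq: "O1 = (\<lambda>g. {g}) ` O2 G K"
  proof
    show "O1 \<subseteq> (\<lambda>g. {g}) ` O2 G K"
    proof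
      fix ob assume "ob \<in> O1"
      then obtain g where g: "g \<in> K" "g \<noteq> \<one>" "ob = {g, inv g}" "card {g, inv g} = 1"
        unfolding O1_def Ob_def Orb_def by auto
      then have "inv g = g" by (auto simp: card_insert_if split: if_splits)
      then have "g \<otimes> g = \<one>" using g Kc by (metis r_inv subsetD)
      then show "ob \<in> (\<lambda>g. {g}) ` O2 G K" using g \<open>inv g = g\<close> unfolding O2_def by auto
    qed
    show "(\<lambda>g. {g}) ` O2 G K \<subseteq> O1"
    proof
      fix ob assume "ob \<in> (\<lambda>g. {g}) ` O2 G K"
      then obtain g where g: "g \<in> K" "g \<noteq> \<one>" "g \<otimes> g = \<one>" "ob = {g}" unfolding O2_def by auto
      then have "inv g = g" using Kc inv_equality by blast
      then have "ob = {g, inv g}" using g by simp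
      then show "ob \<in> O1" unfolding O1_def Ob_def Orb_def using g by auto
    qed
  qed
  have cO1: "card O1 = card (O2 G K)" unfolding O1eq by (simp add: card_image)
  have "card K - 1 = card (\<Union>Ob)" using UO one fK by simp
  also have "\<dots> = sum card Ob" using disj O_fin by (rule card_Union_disjoint)
  also have "\<dots> = sum card O1 + sum card O2'" using Osplit fin12 sum.union_disjoint by metis
  also have "\<dots> = card O1 + 2 * card O2'" unfolding O1_def O2'_def by simp
  finally have c1: "card K - 1 = card O1 + 2 * card O2'" .
  have "0 < card K" using one fK card_gt_0_iff by blast
  then have "card K = 1 + card (O2 G K) + 2 * card O2'" using c1 cO1 by linarith
  moreover have "(\<Sum>\<Omega>\<in>S. x ^ card \<Omega>) = (1 + x\<^sup>2) ^ card O2' * (1 + x) ^ card (O2 G K)"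
    unfolding P2 cO1 by (rule mult.commute)
  ultimately show ?thesis unfolding S_def by blast
qed

end


lemma compr_image: "{ff u | u. PP u} = ff ` {u. PP u}" by blast

context comm_group begin

lemma generate_empty': "generate G {} = {\<one>}"
proof
  show "generate G {} \<subseteq> {\<one>}" by (rule generate_subgroup_incl) (auto intro: triv_subgroup)
  show "{\<one>} \<subseteq> generate G {}" by (auto intro: generate.one)
qed

lemma inner_triv: "\<Omega> \<subseteq> carrier G \<Longrightarrow> g \<in> carrier G \<Longrightarrow> inner_aut G g ` \<Omega> = \<Omega>"
proof -
  assume a: "\<Omega> \<subseteq> carrier G" "g \<in> carrier G"
  have eq: "inner_aut G g y = y" if "y \<in> \<Omega>" for y
  proof -
    have y: "y \<in> carrier G" using a that by blast
    have "inner_aut G g y = g \<otimes> y \<otimes> inv g" unfolding inner_aut_def ..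
    also have "\<dots> = y \<otimes> g \<otimes> inv g" using m_comm[OF a(2) y] by simp
    also have "\<dots> = y \<otimes> (g \<otimes> inv g)" using y a(2) by (simp add: m_assoc)
    also have "\<dots> = y" using y a(2) by simp
    finally show ?thesis .
  qed
  have "inner_aut G g ` \<Omega> = id ` \<Omega>" by (rule image_cong) (simp_all add: eq)
  then show ?thesis by simp
qed

lemma cayley_count_eq:
  "cayley_count G k = card {\<Omega>. \<Omega> \<in> gen_sets G \<and> card \<Omega> = k}"
proof -
  have ne: "carrier G \<noteq> {}" using one_closed by blast
  have "{{inner_aut G g ` \<Omega> | g. g \<in> carrier G} | \<Omega>. \<Omega> \<in> gen_sets G \<and> card \<Omega> = k}
      = (\<lambda>\<Omega>. {\<Omega>}) ` {\<Omega>. \<Omega> \<in> gen_sets G \<and> card \<Omega> = k}"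
  proof -
    have "{inner_aut G g ` \<Omega> | g. g \<in> carrier G} = {\<Omega>}" if "\<Omega> \<in> gen_sets G" for \<Omega>
    proof -
      have \<Omega>c: "\<Omega> \<subseteq> carrier G" using that unfolding gen_sets_def by auto
      have it: "inner_aut G g ` \<Omega> = \<Omega>" if "g \<in> carrier G" for g using inner_triv[OF \<Omega>c that] .
      show ?thesis
      proof
        show "{inner_aut G g ` \<Omega> | g. g \<in> carrier G} \<subseteq> {\<Omega>}" using it by auto
        show "{\<Omega>} \<subseteq> {inner_aut G g ` \<Omega> | g. g \<in> carrier G}"
          using it[OF one_closed] one_closed by auto
      qed
    qed
    then have one: "\<Omega> \<in> {\<Omega>. \<Omega> \<in> gen_sets G \<and> card \<Omega> = k} \<Longrightarrow>
       {inner_aut G g ` \<Omega> | g. g \<in> carrier G} = {\<Omega>}" for \<Omega> by simp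
    have "{{inner_aut G g ` \<Omega> | g. g \<in> carrier G} | \<Omega>. \<Omega> \<in> gen_sets G \<and> card \<Omega> = k}
      = (\<lambda>\<Omega>. {inner_aut G g ` \<Omega> | g. g \<in> carrier G}) ` {\<Omega>. \<Omega> \<in> gen_sets G \<and> card \<Omega> = k}"
      by (rule compr_image)
    also have "\<dots> = (\<lambda>\<Omega>. {\<Omega>}) ` {\<Omega>. \<Omega> \<in> gen_sets G \<and> card \<Omega> = k}"
      by (rule image_cong[OF refl one])
    finally show ?thesis .
  qed
  moreover have "inj_on (\<lambda>\<Omega>. {\<Omega>}) Xs" for Xs :: "'a set set" by (simp add: inj_on_def)
  ultimately show ?thesis unfolding cayley_count_def by (simp add: card_image)
qed

definition Sym :: "'a set \<Rightarrow> 'a set set" where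
  "Sym K = {\<Omega>. \<Omega> \<subseteq> K \<and> (\<lambda>g. inv g) ` \<Omega> = \<Omega> \<and> \<one> \<notin> \<Omega>}"

lemma main:
  fixes x :: real
  assumes fin: "finite (carrier G)"
  shows "Psi G x = (\<Sum>K\<in>{K. subgroup K G}. real_of_int (sg_mobius G K) *
               ((1 + x\<^sup>2) ^ ((card K - card (O2 G K) - 1) div 2) * (1 + x) ^ card (O2 G K) - 1))"
proof -
  define A where "A = carrier G"
  define Sg where "Sg = {K. subgroup K G}"
  define gs where "gs = gen_sets G"
  define F where "F H = (\<Sum>\<Omega>\<in>{\<Omega>\<in>Sym A. generate G \<Omega> = H}. x ^ card \<Omega>)" for H
  define P where "P K = (\<Sum>\<Omega>\<in>Sym K. x ^ card \<Omega>)" for K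
  define \<mu> where "\<mu> = sg_mobius G"
  have finSg: "finite Sg" unfolding Sg_def using finite_subgroups[OF fin, of "\<lambda>_. True"] by simp
  have finSym: "finite (Sym K)" if "K \<subseteq> A" for K
  proof (rule finite_subset[of _ "Pow A"])
    show "Sym K \<subseteq> Pow A" using that unfolding Sym_def by blast
    show "finite (Pow A)" using fin unfolding A_def by simp
  qed
  have gs_eq: "gs = {\<Omega>\<in>Sym A. generate G \<Omega> = A}"
    unfolding gs_def gen_sets_def Sym_def A_def by (simp only: mem_Collect_eq set_eq_iff) blast
  have fings: "finite gs" using gs_eq finSym[of A] by auto
  have Psi1: "Psi G x = (\<Sum>\<Omega>\<in>{\<Omega>\<in>gs. \<Omega> \<noteq> {}}. x ^ card \<Omega>)"
  proof -
    let ?gs' = "{\<Omega>\<in>gs. \<Omega> \<noteq> {}}"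
    have fin': "finite ?gs'" using fings by simp
    have cardrng: "card ` ?gs' \<subseteq> {1..card A - 1}"
    proof
      fix k assume "k \<in> card ` ?gs'"
      then obtain \<Omega> where \<Omega>: "\<Omega> \<in> gs" "\<Omega> \<noteq> {}" "k = card \<Omega>" by auto
      have sub: "\<Omega> \<subseteq> A - {\<one>}" using \<Omega>(1) unfolding gs_def gen_sets_def A_def by auto
      have fA: "finite A" using fin A_def by simp
      then have "finite \<Omega>" using sub finite_subset by blast
      then have "k \<ge> 1" using \<Omega> by (simp add: Suc_leI card_gt_0_iff)
      moreover have "k \<le> card (A - {\<one>})" using card_mono[OF _ sub] fA \<Omega> by simp
      moreover have "card (A - {\<one>}) = card A - 1" using fA by (simp add: A_def)
      ultimately show "k \<in> {1..card A - 1}" by simp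
    qed
    have "(\<Sum>\<Omega>\<in>?gs'. x ^ card \<Omega>) = (\<Sum>k\<in>{1..card A - 1}. \<Sum>\<Omega>\<in>{\<Omega>\<in>?gs'. card \<Omega> = k}. x ^ card \<Omega>)"
      using sum.group[OF fin' _ cardrng, of "\<lambda>\<Omega>. x ^ card \<Omega>"] by simp
    also have "\<dots> = (\<Sum>k\<in>{1..card A - 1}. real (cayley_count G k) * x ^ k)"
    proof (rule sum.cong)
      fix k assume k: "k \<in> {1..card A - 1}"
      have "{\<Omega>\<in>?gs'. card \<Omega> = k} = {\<Omega>. \<Omega> \<in> gen_sets G \<and> card \<Omega> = k}"
        using k unfolding gs_def by auto
      then show "(\<Sum>\<Omega>\<in>{\<Omega>\<in>?gs'. card \<Omega> = k}. x ^ card \<Omega>) = real (cayley_count G k) * x ^ k"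
        by (simp add: cayley_count_eq)
    qed simp
    finally show ?thesis unfolding Psi_def A_def by simp
  qed
  have Psi2: "Psi G x = F A - (if A = {\<one>} then 1 else 0)"
  proof -
    have "{} \<in> gs \<longleftrightarrow> A = {\<one>}"
      unfolding gs_def gen_sets_def A_def using generate_empty' by auto
    moreover have "F A = (\<Sum>\<Omega>\<in>gs. x ^ card \<Omega>)" unfolding F_def gs_eq ..
    moreover have "(\<Sum>\<Omega>\<in>gs. x ^ card \<Omega>) = (\<Sum>\<Omega>\<in>{\<Omega>\<in>gs. \<Omega> \<noteq> {}}. x ^ card \<Omega>)
        + (if {} \<in> gs then 1 else 0)"
    proof (cases "{} \<in> gs")
      case True
      then have "gs = insert {} {\<Omega>\<in>gs. \<Omega> \<noteq> {}}" by auto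
      then have "(\<Sum>\<Omega>\<in>gs. x ^ card \<Omega>) = (\<Sum>\<Omega>\<in>insert {} {\<Omega>\<in>gs. \<Omega> \<noteq> {}}. x ^ card \<Omega>)" by simp
      also have "\<dots> = 1 + (\<Sum>\<Omega>\<in>{\<Omega>\<in>gs. \<Omega> \<noteq> {}}. x ^ card \<Omega>)"
        using fings by (subst sum.insert) auto
      finally show ?thesis using True by simp
    next
      case False
      then have "gs = {\<Omega>\<in>gs. \<Omega> \<noteq> {}}" by auto
      then show ?thesis using False by simp
    qed
    ultimately show ?thesis using Psi1 by simp
  qed
  have PF: "P K = (\<Sum>H\<in>{H\<in>Sg. H \<subseteq> K}. F H)" if K: "K \<in> Sg" for K
  proof -
    have Ks: "subgroup K G" using K Sg_def by simp
    have KA: "K \<subseteq> A" using subgroup.subset[OF Ks] A_def by simp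
    have gsub: "generate G ` Sym K \<subseteq> {H\<in>Sg. H \<subseteq> K}"
    proof
      fix H assume "H \<in> generate G ` Sym K"
      then obtain \<Omega> where \<Omega>: "\<Omega> \<in> Sym K" "H = generate G \<Omega>" by auto
      have "\<Omega> \<subseteq> K" using \<Omega> Sym_def by auto
      then show "H \<in> {H\<in>Sg. H \<subseteq> K}"
        using \<Omega> generate_is_subgroup generate_subgroup_incl[OF _ Ks] KA unfolding Sg_def A_def by auto
    qed
    have finT: "finite {H\<in>Sg. H \<subseteq> K}" using finSg by simp
    have "P K = (\<Sum>H\<in>{H\<in>Sg. H \<subseteq> K}. \<Sum>\<Omega>\<in>{\<Omega>\<in>Sym K. generate G \<Omega> = H}. x ^ card \<Omega>)"
      unfolding P_def using sum.group[OF finSym[OF KA] finT gsub, of "\<lambda>\<Omega>. x ^ card \<Omega>"] by simp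
    also have "\<dots> = (\<Sum>H\<in>{H\<in>Sg. H \<subseteq> K}. F H)"
    proof (rule sum.cong)
      fix H assume H: "H \<in> {H\<in>Sg. H \<subseteq> K}"
      have "{\<Omega>\<in>Sym K. generate G \<Omega> = H} = {\<Omega>\<in>Sym A. generate G \<Omega> = H}"
      proof
        show "{\<Omega>\<in>Sym K. generate G \<Omega> = H} \<subseteq> {\<Omega>\<in>Sym A. generate G \<Omega> = H}"
          using KA unfolding Sym_def by blast
        show "{\<Omega>\<in>Sym A. generate G \<Omega> = H} \<subseteq> {\<Omega>\<in>Sym K. generate G \<Omega> = H}"
        proof (rule subsetI)
          fix \<Omega> assume "\<Omega> \<in> {\<Omega>\<in>Sym A. generate G \<Omega> = H}"
          then have \<Omega>: "\<Omega> \<in> Sym A" "generate G \<Omega> = H" by simp_all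
          have "\<Omega> \<subseteq> generate G \<Omega>" by (auto intro: generate.incl)
          then have "\<Omega> \<subseteq> K" using H \<Omega> by auto
          then have "\<Omega> \<in> Sym K" using \<Omega> unfolding Sym_def by blast
          then show "\<Omega> \<in> {\<Omega>\<in>Sym K. generate G \<Omega> = H}" using \<Omega> by simp
        qed
      qed
      then show "(\<Sum>\<Omega>\<in>{\<Omega>\<in>Sym K. generate G \<Omega> = H}. x ^ card \<Omega>) = F H" unfolding F_def by simp
    qed simp
    finally show ?thesis .
  qed
  have spec: "mob_spec G \<mu>" unfolding \<mu>_def by (rule sg_mobius_spec[OF fin])
  have musum: "(\<Sum>K\<in>{K\<in>Sg. H \<subseteq> K}. real_of_int (\<mu> K)) = (if H = A then 1 else 0)" if "H \<in> Sg" for H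
  proof -
    have i: "(\<Sum>K\<in>{K. subgroup K G \<and> H \<subseteq> K}. \<mu> K) = (if H = A then 1 else 0)"
      using spec that unfolding mob_spec_def Sg_def A_def by simp
    have e: "{K\<in>Sg. H \<subseteq> K} = {K. subgroup K G \<and> H \<subseteq> K}" unfolding Sg_def by simp
    have "(\<Sum>K\<in>{K\<in>Sg. H \<subseteq> K}. real_of_int (\<mu> K)) = real_of_int (\<Sum>K\<in>{K. subgroup K G \<and> H \<subseteq> K}. \<mu> K)"
      unfolding e by (rule of_int_sum[symmetric])
    also have "\<dots> = (if H = A then 1 else 0)" unfolding i by simp
    finally show ?thesis .
  qed
  have triv: "{\<one>} \<in> Sg" unfolding Sg_def using triv_subgroup by simp
  have AS: "A \<in> Sg" unfolding Sg_def A_def using subgroup_self by simp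
  have sum1: "(\<Sum>K\<in>Sg. real_of_int (\<mu> K)) = (if A = {\<one>} then 1 else 0)"
  proof -
    have "{K\<in>Sg. {\<one>} \<subseteq> K} = Sg" unfolding Sg_def using subgroup.one_closed by blast
    then show ?thesis using musum[OF triv] by auto
  qed
  have sumP: "(\<Sum>K\<in>Sg. real_of_int (\<mu> K) * P K) = F A"
  proof -
    have "(\<Sum>K\<in>Sg. real_of_int (\<mu> K) * P K) = (\<Sum>K\<in>Sg. \<Sum>H\<in>{H\<in>Sg. H \<subseteq> K}. real_of_int (\<mu> K) * F H)"
      by (rule sum.cong) (simp_all add: PF sum_distrib_left)
    also have "\<dots> = (\<Sum>H\<in>Sg. \<Sum>K\<in>{K\<in>Sg. H \<subseteq> K}. real_of_int (\<mu> K) * F H)"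
      by (rule sum.swap_restrict[OF finSg finSg])
    also have "\<dots> = (\<Sum>H\<in>Sg. (if H = A then 1 else 0) * F H)"
      by (rule sum.cong) (simp_all add: musum sum_distrib_right[symmetric])
    also have "\<dots> = (\<Sum>H\<in>Sg. if H = A then F H else 0)" by (rule sum.cong) auto
    also have "\<dots> = F A" using AS by (simp add: sum.delta[OF finSg])
    finally show ?thesis .
  qed
  have Pform: "(1 + x\<^sup>2) ^ ((card K - card (O2 G K) - 1) div 2) * (1 + x) ^ card (O2 G K) = P K"
    if "K \<in> Sg" for K
  proof -
    have Ks: "subgroup K G" using that Sg_def by simp
    have fK: "finite K" using subgroup.subset[OF Ks] fin finite_subset by blast
    obtain b where b: "card K = 1 + card (O2 G K) + 2 * b"
      "(\<Sum>\<Omega>\<in>{\<Omega>. \<Omega> \<subseteq> K \<and> (\<lambda>g. inv g) ` \<Omega> = \<Omega> \<and> \<one> \<notin> \<Omega>}. x ^ card \<Omega>)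
        = (1 + x\<^sup>2) ^ b * (1 + x) ^ card (O2 G K)"
      using count_sym[OF Ks fK, of x] by blast
    have "(card K - card (O2 G K) - 1) div 2 = b" using b(1) by simp
    then show ?thesis using b(2) unfolding P_def Sym_def by simp
  qed
  have "(\<Sum>K\<in>Sg. real_of_int (\<mu> K) *
               ((1 + x\<^sup>2) ^ ((card K - card (O2 G K) - 1) div 2) * (1 + x) ^ card (O2 G K) - 1))
      = (\<Sum>K\<in>Sg. real_of_int (\<mu> K) * P K - real_of_int (\<mu> K))"
  proof (rule sum.cong)
    fix K assume K: "K \<in> Sg"
    show "real_of_int (\<mu> K) *
               ((1 + x\<^sup>2) ^ ((card K - card (O2 G K) - 1) div 2) * (1 + x) ^ card (O2 G K) - 1)
        = real_of_int (\<mu> K) * P K - real_of_int (\<mu> K)"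
      unfolding Pform[OF K] by (simp add: right_diff_distrib)
  qed simp
  also have "\<dots> = F A - (if A = {\<one>} then 1 else 0)"
    by (simp add: sum_subtractf sumP sum1)
  finally show ?thesis using Psi2 unfolding Sg_def \<mu>_def by simp
qed

lemma O2_parity:
  assumes fin: "finite (carrier G)" and Ks: "subgroup K G"
  shows "(2::real) ^ ((card K + card (O2 G K) - 1) div 2) =
     (1 + 1\<^sup>2) ^ ((card K - card (O2 G K) - 1) div 2) * (1 + 1) ^ card (O2 G K)"
proof -
  have fK: "finite K" using subgroup.subset[OF Ks] fin finite_subset by blast
  obtain b where b: "card K = 1 + card (O2 G K) + 2 * b"
    using count_sym[OF Ks fK, of 0] by blast
  have "(card K + card (O2 G K) - 1) div 2 = b + card (O2 G K)" using b by simp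
  moreover have "(card K - card (O2 G K) - 1) div 2 = b" using b by simp
  ultimately show ?thesis by (simp add: power_add)
qed

end

theorem theorem3p1:
  fixes G :: "('a, 'b) monoid_scheme"
  assumes "comm_group G" and "finite (carrier G)"
  shows "(\<forall>x::real. Psi G x =
            (\<Sum>K\<in>{K. subgroup K G}. real_of_int (sg_mobius G K) *
               ((1 + x\<^sup>2) ^ ((card K - card (O2 G K) - 1) div 2) * (1 + x) ^ card (O2 G K) - 1)))
       \<and> Ecount G = Psi G 1
       \<and> Psi G 1 = (\<Sum>K\<in>{K. subgroup K G}. real_of_int (sg_mobius G K) *
               (2 ^ ((card K + card (O2 G K) - 1) div 2) - 1))"
proof (intro conjI allI)
  interpret comm_group G by fact
  show "Psi G x = (\<Sum>K\<in>{K. subgroup K G}. real_of_int (sg_mobius G K) *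
               ((1 + x\<^sup>2) ^ ((card K - card (O2 G K) - 1) div 2) * (1 + x) ^ card (O2 G K) - 1))" for x
    by (rule main[OF assms(2)])
  show "Ecount G = Psi G 1" by (simp add: Ecount_def)
  show "Psi G 1 = (\<Sum>K\<in>{K. subgroup K G}. real_of_int (sg_mobius G K) *
               (2 ^ ((card K + card (O2 G K) - 1) div 2) - 1))"
    unfolding main[OF assms(2), of 1]
  proof (rule sum.cong)
    fix K assume "K \<in> {K. subgroup K G}"
    then show "real_of_int (sg_mobius G K) *
          ((1 + 1\<^sup>2) ^ ((card K - card (O2 G K) - 1) div 2) * (1 + 1) ^ card (O2 G K) - 1) =
          real_of_int (sg_mobius G K) * (2 ^ ((card K + card (O2 G K) - 1) div 2) - 1)"
      using O2_parity[OF assms(2), of K] by simp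
  qed simp
qed

end
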